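(* For each $k\in\mathbb{N}$ there exists an instance of the Strip Packing Problem (together with an initial ordering) such that the bottom-left $k$-local search algorithm takes a number of improvement steps that is exponential with respect to the instance size before reaching a local optimum.
   Context: Strip Packing Problem: given a strip width $W>0$ and rectangles $r_1,\dots,r_n$ with widths $w_i\le W$ and heights $h_i$, a packing assigns to each $r_i$ a lower-left corner $(x_i,y_i)$; it is feasible if $x_i\ge 0$, $x_i+w_i\le W$, $y_i\ge 0$ and the open rectangles $(x_i,x_i+w_i)\times(y_i,y_i+h_i)$ are pairwise disjoint; no rotations. The height of a packing is $\max_i(y_i+h_i)$. Bottom-left algorithm: given an ordering, place the first rectangle at $(0,0)$ and then each subsequent rectangle at a feasible position $(x,y)$ (feasible together with those already placed) with $(y,x)$ lexicographically minimal. Bottom-left $k$-local search algorithm: start with an initial ordering and its bottom-left packing. In each iteration (improvement step), choose a new ordering obtained from the current one by permuting at most $k$ rectangles in the ordering such that the bottom-left packing of the new ordering has strictly smaller height, and replace the current ordering by it. Stop when no such improvement exists (a local optimum). *)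

theory Defs
  imports Main "HOL.Real"
begin

text \<open>An instance: strip width W and a list of rectangles (width, height), indexed 0..n-1.
  An ordering is a list of indices, a permutation of [0..<n].
  A packing assigns to each index its lower-left corner (x, y).\<close>

type_synonym rect = "real \<times> real"

definition valid_instance :: "real \<Rightarrow> rect list \<Rightarrow> bool" where
  "valid_instance W rs \<longleftrightarrow> W > 0 \<and> rs \<noteq> [] \<and>
     (\<forall>r \<in> set rs. 0 < fst r \<and> fst r \<le> W \<and> 0 < snd r)"

definition is_ordering :: "rect list \<Rightarrow> nat list \<Rightarrow> bool" where
  "is_ordering rs \<sigma> \<longleftrightarrow> distinct \<sigma> \<and> set \<sigma> = {..<length rs}"

definition open_rect :: "real \<times> real \<Rightarrow> rect \<Rightarrow> (real \<times> real) set" where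
  "open_rect p r = {q. fst p < fst q \<and> fst q < fst p + fst r \<and>
                        snd p < snd q \<and> snd q < snd p + snd r}"

definition feasible_pos :: "real \<Rightarrow> rect list \<Rightarrow> (nat \<Rightarrow> real \<times> real) \<Rightarrow> nat set
                             \<Rightarrow> rect \<Rightarrow> real \<times> real \<Rightarrow> bool" where
  "feasible_pos W rs pos S r p \<longleftrightarrow>
     0 \<le> fst p \<and> fst p + fst r \<le> W \<and> 0 \<le> snd p \<and>
     (\<forall>j \<in> S. open_rect p r \<inter> open_rect (pos j) (rs ! j) = {})"

definition is_BL_packing :: "real \<Rightarrow> rect list \<Rightarrow> nat list \<Rightarrow> (nat \<Rightarrow> real \<times> real) \<Rightarrow> bool" where
  "is_BL_packing W rs \<sigma> pos \<longleftrightarrow>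
     (\<forall>i < length \<sigma>.
        let S = set (take i \<sigma>); r = rs ! (\<sigma> ! i); p = pos (\<sigma> ! i) in
        feasible_pos W rs pos S r p \<and>
        (\<forall>q. feasible_pos W rs pos S r q \<longrightarrow>
              snd p < snd q \<or> (snd p = snd q \<and> fst p \<le> fst q)))"

definition packing_height :: "rect list \<Rightarrow> (nat \<Rightarrow> real \<times> real) \<Rightarrow> real" where
  "packing_height rs pos = Max ((\<lambda>i. snd (pos i) + snd (rs ! i)) ` {..<length rs})"

definition bl_step :: "nat \<Rightarrow> real \<Rightarrow> rect list \<Rightarrow> nat list \<Rightarrow> nat list \<Rightarrow> bool" where
  "bl_step k W rs \<sigma> \<sigma>' \<longleftrightarrow>
     is_ordering rs \<sigma> \<and> is_ordering rs \<sigma>' \<and>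
     card {i. i < length rs \<and> \<sigma> ! i \<noteq> \<sigma>' ! i} \<le> k \<and>
     (\<exists>pos pos'. is_BL_packing W rs \<sigma> pos \<and> is_BL_packing W rs \<sigma>' pos' \<and>
                 packing_height rs pos' < packing_height rs pos)"

definition local_opt :: "nat \<Rightarrow> real \<Rightarrow> rect list \<Rightarrow> nat list \<Rightarrow> bool" where
  "local_opt k W rs \<sigma> \<longleftrightarrow> \<not> (\<exists>\<sigma>'. bl_step k W rs \<sigma> \<sigma>')"

text \<open>The number of improvement steps is length - 1.\<close>
definition bl_run :: "nat \<Rightarrow> real \<Rightarrow> rect list \<Rightarrow> nat list list \<Rightarrow> bool" where
  "bl_run k W rs \<sigma>s \<longleftrightarrow> \<sigma>s \<noteq> [] \<and> is_ordering rs (hd \<sigma>s) \<and>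
     (\<forall>i. Suc i < length \<sigma>s \<longrightarrow> bl_step k W rs (\<sigma>s ! i) (\<sigma>s ! Suc i)) \<and>
     local_opt k W rs (last \<sigma>s)"

end

theory Submission
  imports Defs
begin


definition stp :: "real \<times> real \<Rightarrow> real \<Rightarrow> real \<times> real" where
  "stp ab h = (if fst ab \<le> snd ab then (fst ab + h, snd ab) else (fst ab, snd ab + h))"
definition plc :: "real \<times> real \<Rightarrow> real \<times> real" where
  "plc ab = (if fst ab \<le> snd ab then (0, fst ab) else (1, snd ab))"
definition sim :: "real \<times> real \<Rightarrow> real list \<Rightarrow> real \<times> real" where
  "sim ab hs = foldl stp ab hs"
abbreviation hh :: "rect list \<Rightarrow> nat \<Rightarrow> real" where "hh rs j \<equiv> snd (rs ! j)"

fun placeall :: "rect list \<Rightarrow> real \<times> real \<Rightarrow> nat list \<Rightarrow> nat \<Rightarrow> real \<times> real" where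
  "placeall rs ab [] = (\<lambda>_. (0,0))"
| "placeall rs ab (j # js) = (placeall rs (stp ab (hh rs j)) js)(j := plc ab)"

lemma placeall_nth:
  "distinct \<sigma> \<Longrightarrow> i < length \<sigma> \<Longrightarrow>
   placeall rs ab \<sigma> (\<sigma> ! i) = plc (sim ab (map (hh rs) (take i \<sigma>)))"
proof (induction \<sigma> arbitrary: ab i)
  case Nil then show ?case by simp
next
  case (Cons j js)
  show ?case
  proof (cases i)
    case 0 then show ?thesis by (simp add: sim_def)
  next
    case (Suc i')
    then have "js ! i' \<noteq> j" using Cons.prems by (auto simp: nth_mem)
    then show ?thesis using Cons Suc by (simp add: sim_def)
  qed
qed

lemma overlap:
  assumes "hq > 0" "hj > 0" "\<bar>x - c\<bar> < 1" "yj \<le> y" "y < yj + hj"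
  shows "open_rect (x,y) (1,hq) \<inter> open_rect (c,yj) (1,hj) \<noteq> {}"
proof -
  let ?px = "(max x c + min x c + 1)/2"
  let ?py = "y + min hq (yj + hj - y)/2"
  have "(?px, ?py) \<in> open_rect (x,y) (1,hq)" "(?px,?py) \<in> open_rect (c,yj) (1,hj)"
    unfolding open_rect_def using assms apply (auto simp: max_def min_def abs_if split: if_splits)
    by (simp_all add: field_simps)
  then show ?thesis by blast
qed

lemma disj:
  assumes "y1 + h1 \<le> y2 \<or> y2 + h2 \<le> y1 \<or> x1 + 1 \<le> x2 \<or> x2 + 1 \<le> x1"
  shows "open_rect (x1,y1) (1,h1) \<inter> open_rect (x2,y2) (1,h2) = {}"
  using assms unfolding open_rect_def by auto

definition INV :: "rect list \<Rightarrow> (nat \<Rightarrow> real \<times> real) \<Rightarrow> nat set \<Rightarrow> real \<Rightarrow> real \<Rightarrow> bool" where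
  "INV rs pos S a b \<longleftrightarrow> 0 \<le> a \<and> 0 \<le> b \<and>
    (\<forall>j\<in>S. fst (rs!j) = 1 \<and> 0 < hh rs j \<and>
       ((fst (pos j) = 0 \<and> 0 \<le> snd (pos j) \<and> snd (pos j) + hh rs j \<le> a) \<or>
        (fst (pos j) = 1 \<and> 0 \<le> snd (pos j) \<and> snd (pos j) + hh rs j \<le> b))) \<and>
    (\<forall>y. 0 \<le> y \<and> y < a \<longrightarrow> (\<exists>j\<in>S. fst (pos j) = 0 \<and> snd (pos j) \<le> y \<and> y < snd (pos j) + hh rs j)) \<and>
    (\<forall>y. 0 \<le> y \<and> y < b \<longrightarrow> (\<exists>j\<in>S. fst (pos j) = 1 \<and> snd (pos j) \<le> y \<and> y < snd (pos j) + hh rs j)) \<and>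
    (a = 0 \<or> (\<exists>j\<in>S. fst (pos j) = 0 \<and> snd (pos j) + hh rs j = a)) \<and>
    (b = 0 \<or> (\<exists>j\<in>S. fst (pos j) = 1 \<and> snd (pos j) + hh rs j = b))"

lemma rs_eq: "fst (rs!j) = 1 \<Longrightarrow> rs ! j = (1, hh rs j)"
  by (cases "rs ! j") auto

lemma col_lemma:
  assumes inv: "INV rs pos S a b" and h: "h > 0"
  shows "feasible_pos 2 rs pos S (1,h) (plc (a,b)) \<and>
    (\<forall>q. feasible_pos 2 rs pos S (1,h) q \<longrightarrow>
       snd (plc (a,b)) < snd q \<or> (snd (plc (a,b)) = snd q \<and> fst (plc (a,b)) \<le> fst q))"
proof
  show "feasible_pos 2 rs pos S (1,h) (plc (a,b))"
    unfolding feasible_pos_def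
  proof (intro conjI ballI)
    fix j assume j: "j \<in> S"
    have e: "rs ! j = (1, hh rs j)" using inv j unfolding INV_def by (auto intro: rs_eq)
    have c: "(fst (pos j) = 0 \<and> snd (pos j) + hh rs j \<le> a) \<or> (fst (pos j) = 1 \<and> snd (pos j) + hh rs j \<le> b)"
      using inv j unfolding INV_def by auto
    show "open_rect (plc (a, b)) (1, h) \<inter> open_rect (pos j) (rs ! j) = {}"
    proof (cases "fst (pos j) = 0")
      case True
      then have pe: "pos j = (0, snd (pos j))" by (cases "pos j") auto
      show ?thesis using c True unfolding plc_def
        by (subst e, subst pe, cases "a \<le> b") (auto intro!: disj)
    next
      case False
      then have pe: "pos j = (1, snd (pos j))" using c by (cases "pos j") auto
      show ?thesis using c False unfolding plc_def
        by (subst e, subst pe, cases "a \<le> b") (auto intro!: disj)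
    qed
  qed (use inv in \<open>auto simp: plc_def INV_def\<close>)
next
  show "\<forall>q. feasible_pos 2 rs pos S (1,h) q \<longrightarrow>
       snd (plc (a,b)) < snd q \<or> (snd (plc (a,b)) = snd q \<and> fst (plc (a,b)) \<le> fst q)"
  proof (intro allI impI)
    fix q assume fq: "feasible_pos 2 rs pos S (1,h) q"
    obtain x y where q: "q = (x,y)" by (cases q)
    have x0: "0 \<le> x" and x1: "x \<le> 1" and y0: "0 \<le> y"
      and dis: "\<forall>j\<in>S. open_rect (x,y) (1,h) \<inter> open_rect (pos j) (rs ! j) = {}"
      using fq unfolding feasible_pos_def q by auto
    have A: "1 \<le> x" if "y < a"
    proof (rule ccontr)
      assume "\<not> 1 \<le> x"
      obtain j where j: "j \<in> S" "fst (pos j) = 0" "snd (pos j) \<le> y" "y < snd (pos j) + hh rs j"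
        using inv \<open>y < a\<close> y0 unfolding INV_def by blast
      have e: "rs ! j = (1, hh rs j)" and hp: "hh rs j > 0" using inv j unfolding INV_def by (auto intro: rs_eq)
      have "open_rect (x,y) (1,h) \<inter> open_rect (0, snd (pos j)) (1, hh rs j) \<noteq> {}"
        using \<open>\<not> 1 \<le> x\<close> x0 j hp h by (intro overlap) auto
      moreover have "pos j = (0, snd (pos j))" using j by (cases "pos j") auto
      ultimately show False using dis j e by metis
    qed
    have B: "x \<le> 0" if "y < b"
    proof (rule ccontr)
      assume "\<not> x \<le> 0"
      obtain j where j: "j \<in> S" "fst (pos j) = 1" "snd (pos j) \<le> y" "y < snd (pos j) + hh rs j"
        using inv \<open>y < b\<close> y0 unfolding INV_def by blast
      have e: "rs ! j = (1, hh rs j)" and hp: "hh rs j > 0" using inv j unfolding INV_def by (auto intro: rs_eq)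
      have "open_rect (x,y) (1,h) \<inter> open_rect (1, snd (pos j)) (1, hh rs j) \<noteq> {}"
        using \<open>\<not> x \<le> 0\<close> x1 j hp h by (intro overlap) auto
      moreover have "pos j = (1, snd (pos j))" using j by (cases "pos j") auto
      ultimately show False using dis j e by metis
    qed
    show "snd (plc (a,b)) < snd q \<or> (snd (plc (a,b)) = snd q \<and> fst (plc (a,b)) \<le> fst q)"
      unfolding q plc_def using A B x0 x1 by (cases "a \<le> b") force+
  qed
qed



lemma INV_step:
  assumes inv: "INV rs pos S a b" and w: "fst (rs!j) = 1" and h: "hh rs j > 0"
    and pj: "pos j = plc (a,b)"
  shows "INV rs pos (insert j S) (fst (stp (a,b) (hh rs j))) (snd (stp (a,b) (hh rs j)))"
proof (cases "a \<le> b")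
  case True
  then have st: "stp (a,b) (hh rs j) = (a + hh rs j, b)" and p: "pos j = (0, a)"
    using pj by (auto simp: stp_def plc_def)
  show ?thesis unfolding st INV_def
  proof (intro conjI)
    show "\<forall>y. 0 \<le> y \<and> y < fst (a + hh rs j, b) \<longrightarrow>
      (\<exists>ja\<in>insert j S. fst (pos ja) = 0 \<and> snd (pos ja) \<le> y \<and> y < snd (pos ja) + hh rs ja)"
    proof (intro allI impI)
      fix y assume y: "0 \<le> y \<and> y < fst (a + hh rs j, b)"
      show "\<exists>ja\<in>insert j S. fst (pos ja) = 0 \<and> snd (pos ja) \<le> y \<and> y < snd (pos ja) + hh rs ja"
      proof (cases "y < a")
        case True then show ?thesis using inv y unfolding INV_def by auto
      next
        case False then show ?thesis using y p by (intro bexI[of _ j]) auto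
      qed
    qed
  qed (use inv p w h True in \<open>auto simp: INV_def\<close>)
next
  case False
  then have st: "stp (a,b) (hh rs j) = (a, b + hh rs j)" and p: "pos j = (1, b)"
    using pj by (auto simp: stp_def plc_def)
  show ?thesis unfolding st INV_def
  proof (intro conjI)
    show "\<forall>y. 0 \<le> y \<and> y < snd (a, b + hh rs j) \<longrightarrow>
      (\<exists>ja\<in>insert j S. fst (pos ja) = 1 \<and> snd (pos ja) \<le> y \<and> y < snd (pos ja) + hh rs ja)"
    proof (intro allI impI)
      fix y assume y: "0 \<le> y \<and> y < snd (a, b + hh rs j)"
      show "\<exists>ja\<in>insert j S. fst (pos ja) = 1 \<and> snd (pos ja) \<le> y \<and> y < snd (pos ja) + hh rs ja"
      proof (cases "y < b")
        case True then show ?thesis using inv y unfolding INV_def by auto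
      next
        case False then show ?thesis using y p by (intro bexI[of _ j]) auto
      qed
    qed
  qed (use inv p w h False in \<open>auto simp: INV_def\<close>)
qed

abbreviation TT :: "rect list \<Rightarrow> nat list \<Rightarrow> nat \<Rightarrow> real \<times> real" where
  "TT rs \<sigma> i \<equiv> sim (0,0) (map (hh rs) (take i \<sigma>))"

lemma INV_all:
  assumes d: "distinct \<sigma>" and w: "\<forall>j\<in>set \<sigma>. fst (rs!j) = 1 \<and> hh rs j > 0"
  shows "i \<le> length \<sigma> \<Longrightarrow> INV rs (placeall rs (0,0) \<sigma>) (set (take i \<sigma>)) (fst (TT rs \<sigma> i)) (snd (TT rs \<sigma> i))"
proof (induction i)
  case 0 then show ?case by (simp add: INV_def sim_def)
next
  case (Suc i)
  then have i: "i < length \<sigma>" by simp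
  have t: "take (Suc i) \<sigma> = take i \<sigma> @ [\<sigma> ! i]" using i by (simp add: take_Suc_conv_app_nth)
  have T: "TT rs \<sigma> (Suc i) = stp (TT rs \<sigma> i) (hh rs (\<sigma> ! i))" unfolding t by (simp add: sim_def)
  have p: "placeall rs (0,0) \<sigma> (\<sigma> ! i) = plc (fst (TT rs \<sigma> i), snd (TT rs \<sigma> i))"
    using placeall_nth[OF d i] by simp
  have wi: "fst (rs!(\<sigma>!i)) = 1" "hh rs (\<sigma>!i) > 0" using w i by (auto simp: nth_mem)
  have "INV rs (placeall rs (0,0) \<sigma>) (insert (\<sigma>!i) (set (take i \<sigma>)))
      (fst (stp (fst (TT rs \<sigma> i), snd (TT rs \<sigma> i)) (hh rs (\<sigma> ! i))))
      (snd (stp (fst (TT rs \<sigma> i), snd (TT rs \<sigma> i)) (hh rs (\<sigma> ! i))))"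
    using INV_step[OF Suc.IH[OF less_imp_le[OF i]] wi p] .
  then show ?case unfolding T unfolding t by simp
qed

lemma BL_sim:
  assumes d: "distinct \<sigma>" and w: "\<forall>j\<in>set \<sigma>. fst (rs!j) = 1 \<and> hh rs j > 0"
  shows "is_BL_packing 2 rs \<sigma> (placeall rs (0,0) \<sigma>)"
  unfolding is_BL_packing_def Let_def
proof (intro allI impI)
  fix i assume i: "i < length \<sigma>"
  have inv: "INV rs (placeall rs (0,0) \<sigma>) (set (take i \<sigma>)) (fst (TT rs \<sigma> i)) (snd (TT rs \<sigma> i))"
    using INV_all[OF d w] i by simp
  have wi: "fst (rs!(\<sigma>!i)) = 1" "hh rs (\<sigma>!i) > 0" using w i by (auto simp: nth_mem)
  obtain h where e: "rs ! (\<sigma>!i) = (1, h)" and hpos: "h > 0" using rs_eq[OF wi(1)] wi(2) by (metis snd_conv)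
  have p: "placeall rs (0,0) \<sigma> (\<sigma> ! i) = plc (fst (TT rs \<sigma> i), snd (TT rs \<sigma> i))"
    using placeall_nth[OF d i] by simp
  show "feasible_pos 2 rs (placeall rs (0, 0) \<sigma>) (set (take i \<sigma>)) (rs ! (\<sigma> ! i)) (placeall rs (0, 0) \<sigma> (\<sigma> ! i)) \<and>
         (\<forall>q. feasible_pos 2 rs (placeall rs (0, 0) \<sigma>) (set (take i \<sigma>)) (rs ! (\<sigma> ! i)) q \<longrightarrow>
              snd (placeall rs (0, 0) \<sigma> (\<sigma> ! i)) < snd q \<or>
              snd (placeall rs (0, 0) \<sigma> (\<sigma> ! i)) = snd q \<and> fst (placeall rs (0, 0) \<sigma> (\<sigma> ! i)) \<le> fst q)"
    unfolding p e using col_lemma[OF inv hpos] by simp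
qed

lemma height_sim:
  assumes o: "is_ordering rs \<sigma>" and ne: "rs \<noteq> []" and w: "\<forall>j<length rs. fst (rs!j) = 1 \<and> hh rs j > 0"
  shows "packing_height rs (placeall rs (0,0) \<sigma>) = max (fst (sim (0,0) (map (hh rs) \<sigma>))) (snd (sim (0,0) (map (hh rs) \<sigma>)))"
proof -
  have d: "distinct \<sigma>" and s: "set \<sigma> = {..<length rs}" using o by (auto simp: is_ordering_def)
  have w': "\<forall>j\<in>set \<sigma>. fst (rs!j) = 1 \<and> hh rs j > 0" using w s by auto
  define a where "a = fst (sim (0,0) (map (hh rs) \<sigma>))"
  define b where "b = snd (sim (0,0) (map (hh rs) \<sigma>))"
  define pos where "pos = placeall rs (0,0) \<sigma>"
  have inv: "INV rs pos {..<length rs} a b"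
    using INV_all[OF d w', of "length \<sigma>"] s unfolding a_def b_def pos_def by simp
  let ?A = "(\<lambda>i. snd (pos i) + snd (rs ! i)) ` {..<length rs}"
  have bel: "\<forall>j\<in>{..<length rs}. fst (rs!j) = 1 \<and> 0 < hh rs j \<and>
       ((fst (pos j) = 0 \<and> 0 \<le> snd (pos j) \<and> snd (pos j) + hh rs j \<le> a) \<or>
        (fst (pos j) = 1 \<and> 0 \<le> snd (pos j) \<and> snd (pos j) + hh rs j \<le> b))"
    using inv unfolding INV_def by blast
  have le1: "snd (pos j) + hh rs j \<le> max a b" and pos1: "0 < snd (pos j) + hh rs j"
    if "j < length rs" for j
  proof -
    have "(0 \<le> snd (pos j) \<and> snd (pos j) + hh rs j \<le> a) \<or> (0 \<le> snd (pos j) \<and> snd (pos j) + hh rs j \<le> b)" "0 < hh rs j"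
      using bel that by auto
    then show "snd (pos j) + hh rs j \<le> max a b" "0 < snd (pos j) + hh rs j" by (auto simp: le_max_iff_disj)
  qed
  have le: "\<forall>x\<in>?A. x \<le> max a b" using le1 by blast
  have "0 < length rs" using ne by simp
  then have nz: "\<not> (a = 0 \<and> b = 0)" using le1[of 0] pos1[of 0] by auto
  have mem: "max a b \<in> ?A"
  proof (cases "b \<le> a")
    case True
    then have "a \<noteq> 0" using nz inv unfolding INV_def by linarith
    moreover have "a = 0 \<or> (\<exists>j\<in>{..<length rs}. fst (pos j) = 0 \<and> snd (pos j) + hh rs j = a)"
      using inv unfolding INV_def by blast
    ultimately obtain j where "j < length rs" "snd (pos j) + hh rs j = a" by auto
    then show ?thesis using True by (auto simp: max_def)
  next
    case False
    then have "b \<noteq> 0" using nz inv unfolding INV_def by linarith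
    moreover have "b = 0 \<or> (\<exists>j\<in>{..<length rs}. fst (pos j) = 1 \<and> snd (pos j) + hh rs j = b)"
      using inv unfolding INV_def by blast
    ultimately obtain j where "j < length rs" "snd (pos j) + hh rs j = b" by auto
    then show ?thesis using False by (auto simp: max_def)
  qed
  have "Max ?A = max a b" by (rule Max_eqI) (use le mem in auto)
  then show ?thesis unfolding packing_height_def a_def b_def pos_def .
qed

lemma BL_unique:
  assumes d: "distinct \<sigma>" and p1: "is_BL_packing W rs \<sigma> pos1" and p2: "is_BL_packing W rs \<sigma> pos2"
  shows "i \<le> length \<sigma> \<Longrightarrow> \<forall>j\<in>set (take i \<sigma>). pos1 j = pos2 j"
proof (induction i)
  case 0 then show ?case by simp
next
  case (Suc i)
  then have i: "i < length \<sigma>" by simp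
  have t: "take (Suc i) \<sigma> = take i \<sigma> @ [\<sigma> ! i]" using i by (simp add: take_Suc_conv_app_nth)
  have IH: "\<forall>j\<in>set (take i \<sigma>). pos1 j = pos2 j" using Suc i by simp
  let ?S = "set (take i \<sigma>)" let ?r = "rs ! (\<sigma> ! i)"
  have feq: "feasible_pos W rs pos1 ?S ?r q = feasible_pos W rs pos2 ?S ?r q" for q
    unfolding feasible_pos_def using IH by auto
  have a1: "feasible_pos W rs pos1 ?S ?r (pos1 (\<sigma>!i))"
    "\<forall>q. feasible_pos W rs pos1 ?S ?r q \<longrightarrow> snd (pos1 (\<sigma>!i)) < snd q \<or> (snd (pos1 (\<sigma>!i)) = snd q \<and> fst (pos1 (\<sigma>!i)) \<le> fst q)"
    using p1 i unfolding is_BL_packing_def Let_def by auto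
  have a2: "feasible_pos W rs pos2 ?S ?r (pos2 (\<sigma>!i))"
    "\<forall>q. feasible_pos W rs pos2 ?S ?r q \<longrightarrow> snd (pos2 (\<sigma>!i)) < snd q \<or> (snd (pos2 (\<sigma>!i)) = snd q \<and> fst (pos2 (\<sigma>!i)) \<le> fst q)"
    using p2 i unfolding is_BL_packing_def Let_def by auto
  have "snd (pos1 (\<sigma>!i)) < snd (pos2 (\<sigma>!i)) \<or> (snd (pos1 (\<sigma>!i)) = snd (pos2 (\<sigma>!i)) \<and> fst (pos1 (\<sigma>!i)) \<le> fst (pos2 (\<sigma>!i)))"
    using a1(2) a2(1) feq by blast
  moreover have "snd (pos2 (\<sigma>!i)) < snd (pos1 (\<sigma>!i)) \<or> (snd (pos2 (\<sigma>!i)) = snd (pos1 (\<sigma>!i)) \<and> fst (pos2 (\<sigma>!i)) \<le> fst (pos1 (\<sigma>!i)))"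
    using a2(2) a1(1) feq by blast
  ultimately have "pos1 (\<sigma>!i) = pos2 (\<sigma>!i)" by (auto intro: prod_eqI)
  then show ?case using IH unfolding t by auto
qed

lemma height_unique:
  assumes o: "is_ordering rs \<sigma>" and p1: "is_BL_packing W rs \<sigma> pos1" and p2: "is_BL_packing W rs \<sigma> pos2"
  shows "packing_height rs pos1 = packing_height rs pos2"
proof -
  have d: "distinct \<sigma>" and s: "set \<sigma> = {..<length rs}" using o by (auto simp: is_ordering_def)
  have "\<forall>j\<in>set \<sigma>. pos1 j = pos2 j" using BL_unique[OF d p1 p2, of "length \<sigma>"] by simp
  then have "\<forall>j\<in>{..<length rs}. pos1 j = pos2 j" using s by simp
  then show ?thesis unfolding packing_height_def by (intro arg_cong[where f=Max] image_cong) auto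
qed



definition BB :: "nat \<Rightarrow> real" where "BB n = 2^(n+2)"
definition rf :: "nat \<Rightarrow> nat \<Rightarrow> rect" where
  "rf n j = (if j = 0 then (1,1) else if odd j then (1, BB n + 2^((j+1) div 2)) else (1, BB n))"
definition rsI :: "nat \<Rightarrow> rect list" where "rsI n = map (rf n) [0..<2*n+1]"

definition blk :: "nat \<Rightarrow> bool \<Rightarrow> nat list" where
  "blk i b = (if b then [2*i+1, 2*i+2] else [2*i+2, 2*i+1])"
fun ordg :: "nat \<Rightarrow> bool list \<Rightarrow> nat list" where
  "ordg i [] = []"
| "ordg i (b # bs) = blk i b @ ordg (Suc i) bs"
definition ordv :: "bool list \<Rightarrow> nat list" where "ordv v = 0 # ordg 0 v"

definition ee :: "nat \<Rightarrow> bool \<Rightarrow> real" where "ee i b = (if b then 2^(i+1) else -(2^(i+1)))"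
definition dstep :: "real \<Rightarrow> real \<Rightarrow> real" where "dstep D e = (if D \<le> 0 then D + e else D - e)"
fun Dsig :: "nat \<Rightarrow> real \<Rightarrow> bool list \<Rightarrow> real" where
  "Dsig i D [] = D"
| "Dsig i D (b # bs) = Dsig (Suc i) (dstep D (ee i b)) bs"

lemma len_ordg: "length (ordg i bs) = 2 * length bs"
  by (induction bs arbitrary: i) (auto simp: blk_def)

lemma set_ordg: "set (ordg i bs) = {2*i+1 ..< 2*(i + length bs)+1}"
proof (induction bs arbitrary: i)
  case Nil then show ?case by simp
next
  case (Cons b bs)
  have "{2*i+1 ..< 2*(i + length (b#bs))+1} = {2*i+1, 2*i+2} \<union> {2*Suc i+1 ..< 2*(Suc i + length bs)+1}"
    by auto
  then show ?case using Cons by (auto simp: blk_def)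
qed

lemma distinct_ordg: "distinct (ordg i bs)"
proof (induction bs arbitrary: i)
  case Nil then show ?case by simp
next
  case (Cons b bs)
  then show ?case by (auto simp: blk_def set_ordg)
qed

lemma len_rsI: "length (rsI n) = 2*n+1" by (simp add: rsI_def)

lemma ordering_ordv: "length v = n \<Longrightarrow> is_ordering (rsI n) (ordv v)"
  unfolding is_ordering_def ordv_def len_rsI
  using distinct_ordg[of 0 v] set_ordg[of 0 v] by auto

lemma rsI_nth: "j < 2*n+1 \<Longrightarrow> rsI n ! j = rf n j"
  by (simp add: rsI_def del: upt_Suc)

lemma rsI_wd: "j < length (rsI n) \<Longrightarrow> fst (rsI n ! j) = 1 \<and> hh (rsI n) j > 0"
  using rsI_nth[of j n] by (auto simp: len_rsI rf_def BB_def add_pos_pos)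

lemma sim_append: "sim ab (xs @ ys) = sim (sim ab xs) ys"
  by (simp add: sim_def)

lemma sim_sum: "fst (sim ab hs) + snd (sim ab hs) = fst ab + snd ab + sum_list hs"
  by (induction hs arbitrary: ab) (auto simp: sim_def stp_def)

lemma dstep_bnd: "\<bar>D\<bar> < d \<Longrightarrow> \<bar>e\<bar> \<le> d \<Longrightarrow> \<bar>dstep D e\<bar> < 2*d"
  by (auto simp: dstep_def abs_if split: if_splits)

lemma sum_ordg: fixes f :: "nat \<Rightarrow> real" shows "length bs = length cs \<Longrightarrow>
   sum_list (map f (ordg i bs)) = sum_list (map f (ordg i cs))"
  by (induction bs cs arbitrary: i rule: list_induct2) (auto simp: blk_def algebra_simps)

lemma pair_sim:
  assumes "\<bar>a - b\<bar> < p" "\<bar>a - b\<bar> < q"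
  shows "fst (sim (a,b) [p,q]) - snd (sim (a,b) [p,q]) = dstep (a - b) (p - q)"
  using assms by (auto simp: sim_def stp_def dstep_def)

lemma sim_ordg:
  "i + length bs \<le> n \<Longrightarrow> \<bar>a - b\<bar> < 2^(i+1) \<Longrightarrow>
   fst (sim (a,b) (map (hh (rsI n)) (ordg i bs))) - snd (sim (a,b) (map (hh (rsI n)) (ordg i bs)))
     = Dsig i (a - b) bs"
proof (induction bs arbitrary: i a b)
  case Nil then show ?case by (simp add: sim_def)
next
  case (Cons c cs)
  have i: "i < n" using Cons.prems by simp
  have r1: "rsI n ! (2*i+1) = (1, BB n + 2^(i+1))" using i by (simp add: rsI_nth rf_def)
  have r2: "rsI n ! (2*i+2) = (1, BB n)" using i by (simp add: rsI_nth rf_def)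
  have pw: "(2::real)^(i+1) \<le> 2^n" using i by (intro power_increasing) auto
  have bb: "(2::real)^n < BB n" unfolding BB_def by (simp add: power_strict_increasing)
  have small: "\<bar>a - b\<bar> < BB n" using Cons.prems(2) pw bb by linarith
  have pos2: "(0::real) < 2^(i+1)" by simp
  define hs where "hs = map (hh (rsI n)) (blk i c)"
  have hs: "hs = (if c then [BB n + 2^(i+1), BB n] else [BB n, BB n + 2^(i+1)])"
    unfolding hs_def blk_def using r1 r2 by simp
  define ab' where "ab' = sim (a,b) hs"
  have d': "fst ab' - snd ab' = dstep (a - b) (ee i c)"
  proof (cases c)
    case True
    have "\<bar>a - b\<bar> < BB n + 2^(i+1)" using small pos2 by linarith
    then show ?thesis unfolding ab'_def hs using True small pair_sim[of a b "BB n + 2^(i+1)" "BB n"] by (simp add: ee_def)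
  next
    case False
    have "\<bar>a - b\<bar> < BB n + 2^(i+1)" using small pos2 by linarith
    then show ?thesis unfolding ab'_def hs using False small pair_sim[of a b "BB n" "BB n + 2^(i+1)"] by (simp add: ee_def)
  qed
  have bnd: "\<bar>fst ab' - snd ab'\<bar> < 2^(Suc i+1)"
  proof -
    have "\<bar>dstep (a - b) (ee i c)\<bar> < 2 * 2^(i+1)"
      using Cons.prems(2) by (intro dstep_bnd) (auto simp: ee_def)
    then show ?thesis unfolding d' by simp
  qed
  have "sim (a,b) (map (hh (rsI n)) (ordg i (c # cs))) = sim (fst ab', snd ab') (map (hh (rsI n)) (ordg (Suc i) cs))"
    by (simp add: sim_append ab'_def hs_def)
  then show ?case using Cons.IH[of "Suc i" "fst ab'" "snd ab'"] Cons.prems bnd d' by simp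
qed

definition Hgt :: "nat \<Rightarrow> nat list \<Rightarrow> real" where
  "Hgt n \<sigma> = packing_height (rsI n) (placeall (rsI n) (0,0) \<sigma>)"

definition XX :: "bool list \<Rightarrow> real" where "XX v = \<bar>Dsig 0 1 v\<bar>"

lemma Hgt_formula:
  assumes "length v = n"
  shows "Hgt n (ordv v) = (1 + sum_list (map (hh (rsI n)) (ordg 0 (replicate n True))) + XX v) / 2"
proof -
  have o: "is_ordering (rsI n) (ordv v)" using ordering_ordv[OF assms] .
  have ne: "rsI n \<noteq> []" by (simp add: rsI_def)
  have w: "\<forall>j<length (rsI n). fst (rsI n!j) = 1 \<and> hh (rsI n) j > 0" using rsI_wd by blast
  have r0: "rsI n ! 0 = (1,1)" by (simp add: rsI_nth rf_def)
  define ab where "ab = sim (0,0) (map (hh (rsI n)) (ordv v))"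
  have ab: "ab = sim (1,0) (map (hh (rsI n)) (ordg 0 v))"
    unfolding ab_def ordv_def using r0 by (simp add: sim_def stp_def)
  have diff: "fst ab - snd ab = Dsig 0 1 v" unfolding ab using sim_ordg[of 0 v n 1 0] assms by simp
  have sum: "fst ab + snd ab = 1 + sum_list (map (hh (rsI n)) (ordg 0 (replicate n True)))"
    unfolding ab using sim_sum[of "(1,0)"] sum_ordg[of v "replicate n True"] assms by simp
  have "Hgt n (ordv v) = max (fst ab) (snd ab)"
    unfolding Hgt_def ab_def using height_sim[OF o ne w] by simp
  also have "\<dots> = (fst ab + snd ab + \<bar>fst ab - snd ab\<bar>) / 2" by (simp add: max_def abs_if)
  finally show ?thesis using sum diff by (simp add: XX_def)
qed

lemma Hgt_less: "length v = n \<Longrightarrow> length w = n \<Longrightarrow> XX w < XX v \<Longrightarrow> Hgt n (ordv w) < Hgt n (ordv v)"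
  using Hgt_formula[of v n] Hgt_formula[of w n] by simp



lemma Dsig_snoc: "Dsig i D (bs @ [b]) = dstep (Dsig i D bs) (ee (i + length bs) b)"
  by (induction bs arbitrary: i D) auto

lemma abs_dstep: "\<bar>dstep D e\<bar> = \<bar>\<bar>D\<bar> - e\<bar>"
  by (auto simp: dstep_def abs_if)

lemma XX_snoc: "XX (v @ [b]) = \<bar>XX v - ee (length v) b\<bar>"
  unfolding XX_def by (simp add: Dsig_snoc abs_dstep)

fun PP :: "nat \<Rightarrow> bool list list" where
  "PP 0 = [[]]"
| "PP (Suc m) = map (\<lambda>v. v @ [False]) (PP m) @ map (\<lambda>v. v @ [True]) (rev (PP m))"

definition Adj :: "bool list \<Rightarrow> bool list \<Rightarrow> bool" where
  "Adj v w \<longleftrightarrow> (\<exists>xs b ys. v = xs @ b # ys \<and> w = xs @ (\<not> b) # ys)"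

lemma Adj_sym: assumes "Adj v w" shows "Adj w v"
proof -
  obtain xs b ys where "v = xs @ b # ys" "w = xs @ (\<not> b) # ys" using assms Adj_def by blast
  then show ?thesis unfolding Adj_def by (intro exI[of _ xs] exI[of _ "\<not> b"] exI[of _ ys]) simp
qed

lemma Adj_snoc: "Adj v w \<Longrightarrow> Adj (v @ [c]) (w @ [c])"
  unfolding Adj_def by fastforce

lemma PP_props:
  "length (PP m) = 2^m \<and> (\<forall>v\<in>set (PP m). length v = m \<and> 0 < XX v \<and> XX v < 2^(m+1)) \<and>
   sorted_wrt (\<lambda>u w. XX w < XX u) (PP m) \<and> successively Adj (PP m)"
proof (induction m)
  case 0 then show ?case by (simp add: XX_def)
next
  case (Suc m)
  have L: "length (PP m) = 2^m" and S: "\<forall>v\<in>set (PP m). length v = m \<and> 0 < XX v \<and> XX v < 2^(m+1)"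
    and So: "sorted_wrt (\<lambda>u w. XX w < XX u) (PP m)" and A: "successively Adj (PP m)"
    using Suc by auto
  have xf: "XX (v @ [False]) = XX v + 2^(m+1)" if "v \<in> set (PP m)" for v
  proof -
    have l: "length v = m" and p: "0 < XX v" using S that by auto
    have "XX (v @ [False]) = \<bar>XX v + 2^(m+1)\<bar>" using l by (simp add: XX_snoc ee_def)
    also have "\<dots> = XX v + 2^(m+1)" using p by (intro abs_of_pos) (simp add: add_pos_pos)
    finally show ?thesis .
  qed
  have xt: "XX (v @ [True]) = 2^(m+1) - XX v" if "v \<in> set (PP m)" for v
  proof -
    have l: "length v = m" and p: "XX v < 2^(m+1)" using S that by auto
    have "XX (v @ [True]) = \<bar>XX v - 2^(m+1)\<bar>" using l by (simp add: XX_snoc ee_def)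
    also have "\<dots> = 2^(m+1) - XX v" using p by (simp add: abs_if)
    finally show ?thesis .
  qed
  have ne: "PP m \<noteq> []" using L by auto
  have 1: "length (PP (Suc m)) = 2^Suc m" using L by simp
  have 2: "\<forall>v\<in>set (PP (Suc m)). length v = Suc m \<and> 0 < XX v \<and> XX v < 2^(Suc m+1)"
    using S xf xt by auto
  have 3: "sorted_wrt (\<lambda>u w. XX w < XX u) (PP (Suc m))"
    unfolding PP.simps sorted_wrt_append sorted_wrt_map sorted_wrt_rev
  proof (intro conjI)
    show "sorted_wrt (\<lambda>x y. XX (y @ [False]) < XX (x @ [False])) (PP m)"
      by (rule sorted_wrt_mono_rel[OF _ So]) (simp add: xf)
    show "sorted_wrt (\<lambda>x y. XX (x @ [True]) < XX (y @ [True])) (PP m)"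
      by (rule sorted_wrt_mono_rel[OF _ So]) (simp add: xt)
    show "\<forall>x\<in>set (map (\<lambda>v. v @ [False]) (PP m)). \<forall>y\<in>set (map (\<lambda>v. v @ [True]) (rev (PP m))). XX y < XX x"
    proof (intro ballI)
      fix x y assume x: "x \<in> set (map (\<lambda>v. v @ [False]) (PP m))" and y: "y \<in> set (map (\<lambda>v. v @ [True]) (rev (PP m)))"
      obtain u where u: "u \<in> set (PP m)" "x = u @ [False]" using x by auto
      obtain w where w: "w \<in> set (PP m)" "y = w @ [True]" using y by auto
      have "0 < XX u" "0 < XX w" using S u w by auto
      then show "XX y < XX x" using xf[OF u(1)] xt[OF w(1)] u w by simp
    qed
  qed
  have 4: "successively Adj (PP (Suc m))"
    unfolding PP.simps successively_append_iff successively_map successively_rev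
  proof (intro conjI)
    show "successively (\<lambda>x y. Adj (x @ [False]) (y @ [False])) (PP m)"
      by (rule successively_mono[OF A]) (simp add: Adj_snoc)
    show "successively (\<lambda>x y. Adj (y @ [True]) (x @ [True])) (PP m)"
      by (rule successively_mono[OF A]) (simp add: Adj_snoc Adj_sym)
    have "Adj (last (PP m) @ [False]) (last (PP m) @ [True])"
      unfolding Adj_def by (intro exI[of _ "last (PP m)"] exI[of _ False] exI[of _ "[]"]) simp
    then show "map (\<lambda>v. v @ [False]) (PP m) = [] \<or> map (\<lambda>v. v @ [True]) (rev (PP m)) = [] \<or>
      Adj (last (map (\<lambda>v. v @ [False]) (PP m))) (hd (map (\<lambda>v. v @ [True]) (rev (PP m))))"
      using ne by (simp add: last_map hd_map hd_rev)
  qed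
  show ?case using 1 2 3 4 by blast
qed

lemma ordg_append: "ordg i (xs @ ys) = ordg i xs @ ordg (i + length xs) ys"
  by (induction xs arbitrary: i) auto

lemma len_blk[simp]: "length (blk i b) = 2" by (simp add: blk_def)

lemma nth_mid: "length X = length Y \<Longrightarrow> t < length A \<or> length A + length X \<le> t \<Longrightarrow>
   (A @ X @ C) ! t = (A @ Y @ C) ! t"
  by (auto simp: nth_append)

lemma card_diff:
  assumes "Adj v w"
  shows "card {i. i < length rs \<and> ordv v ! i \<noteq> ordv w ! i} \<le> 2"
proof -
  obtain xs b ys where v: "v = xs @ b # ys" and w: "w = xs @ (\<not> b) # ys" using assms Adj_def by blast
  let ?L = "length xs"
  have ov: "ordv v = (0 # ordg 0 xs) @ blk ?L b @ ordg (Suc ?L) ys"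
    unfolding v ordv_def by (simp add: ordg_append)
  have ow: "ordv w = (0 # ordg 0 xs) @ blk ?L (\<not> b) @ ordg (Suc ?L) ys"
    unfolding w ordv_def by (simp add: ordg_append)
  have lb: "length (blk ?L b) = length (blk ?L (\<not> b))" by (simp add: blk_def)
  have "{i. i < length rs \<and> ordv v ! i \<noteq> ordv w ! i} \<subseteq> {2*?L+1, 2*?L+2}"
  proof
    fix t assume "t \<in> {i. i < length rs \<and> ordv v ! i \<noteq> ordv w ! i}"
    then have ne: "ordv v ! t \<noteq> ordv w ! t" by simp
    have "\<not> (t < length (0 # ordg 0 xs) \<or> length (0 # ordg 0 xs) + length (blk ?L b) \<le> t)"
      using ne nth_mid[OF lb, of t "0 # ordg 0 xs" "ordg (Suc ?L) ys"] unfolding ov ow by blast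
    then show "t \<in> {2*?L+1, 2*?L+2}" by (auto simp: len_ordg)
  qed
  then have "card {i. i < length rs \<and> ordv v ! i \<noteq> ordv w ! i} \<le> card {2*?L+1, 2*?L+2}"
    by (intro card_mono) auto
  also have "\<dots> \<le> 2" by simp
  finally show ?thesis .
qed

lemma succ_nth: "successively R xs \<longleftrightarrow> (\<forall>i. Suc i < length xs \<longrightarrow> R (xs ! i) (xs ! Suc i))"
proof (induction xs)
  case Nil then show ?case by simp
next
  case (Cons x xs)
  show ?case
  proof (cases xs)
    case Nil then show ?thesis by simp
  next
    case (Cons y ys)
    have "successively R (x # xs) \<longleftrightarrow> R x y \<and> successively R xs" using Cons by simp
    also have "\<dots> \<longleftrightarrow> R x y \<and> (\<forall>i. Suc i < length xs \<longrightarrow> R (xs ! i) (xs ! Suc i))"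
      using Cons.IH by simp
    also have "\<dots> \<longleftrightarrow> (\<forall>i. Suc i < length (x # xs) \<longrightarrow> R ((x # xs) ! i) ((x # xs) ! Suc i))"
    proof
      assume h: "R x y \<and> (\<forall>i. Suc i < length xs \<longrightarrow> R (xs ! i) (xs ! Suc i))"
      show "\<forall>i. Suc i < length (x # xs) \<longrightarrow> R ((x # xs) ! i) ((x # xs) ! Suc i)"
      proof (intro allI impI)
        fix i assume "Suc i < length (x # xs)"
        then show "R ((x # xs) ! i) ((x # xs) ! Suc i)" using h Cons by (cases i) auto
      qed
    next
      assume h: "\<forall>i. Suc i < length (x # xs) \<longrightarrow> R ((x # xs) ! i) ((x # xs) ! Suc i)"
      have "R x y" using h[rule_format, of 0] Cons by simp
      moreover have "\<forall>i. Suc i < length xs \<longrightarrow> R (xs ! i) (xs ! Suc i)"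
      proof (intro allI impI)
        fix i assume "Suc i < length xs"
        then show "R (xs ! i) (xs ! Suc i)" using h[rule_format, of "Suc i"] by simp
      qed
      ultimately show "R x y \<and> (\<forall>i. Suc i < length xs \<longrightarrow> R (xs ! i) (xs ! Suc i))" by blast
    qed
    finally show ?thesis .
  qed
qed

lemma succ_conj: "successively P xs \<Longrightarrow> successively Q xs \<Longrightarrow>
  (\<And>x y. x \<in> set xs \<Longrightarrow> y \<in> set xs \<Longrightarrow> P x y \<Longrightarrow> Q x y \<Longrightarrow> S x y) \<Longrightarrow> successively S xs"
proof (induction xs)
  case (Cons x xs)
  then show ?case by (cases xs) (auto simp: successively_Cons)
qed simp

lemma ext_gen:
  fixes R :: "'a \<Rightarrow> 'a \<Rightarrow> bool" and g :: "'a \<Rightarrow> real"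
  assumes fin: "finite {\<tau>. Q \<tau>}" and st: "\<And>\<sigma> \<sigma>'. R \<sigma> \<sigma>' \<Longrightarrow> Q \<sigma>' \<and> g \<sigma>' < g \<sigma>"
  shows "\<exists>ts. ts \<noteq> [] \<and> hd ts = \<sigma> \<and> successively R ts \<and> \<not> (\<exists>\<sigma>'. R (last ts) \<sigma>')"
proof (induction "card {\<tau>. Q \<tau> \<and> g \<tau> < g \<sigma>}" arbitrary: \<sigma> rule: less_induct)
  case less
  show ?case
  proof (cases "\<exists>\<sigma>'. R \<sigma> \<sigma>'")
    case False then show ?thesis by (intro exI[of _ "[\<sigma>]"]) auto
  next
    case True
    then obtain \<sigma>' where r: "R \<sigma> \<sigma>'" by blast
    have q': "Q \<sigma>'" and lt: "g \<sigma>' < g \<sigma>" using st[OF r] by auto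
    have sub: "{\<tau>. Q \<tau> \<and> g \<tau> < g \<sigma>'} \<subset> {\<tau>. Q \<tau> \<and> g \<tau> < g \<sigma>}" using q' lt by auto
    have "finite {\<tau>. Q \<tau> \<and> g \<tau> < g \<sigma>}" by (rule finite_subset[OF _ fin]) auto
    then have "card {\<tau>. Q \<tau> \<and> g \<tau> < g \<sigma>'} < card {\<tau>. Q \<tau> \<and> g \<tau> < g \<sigma>}"
      by (rule psubset_card_mono[OF _ sub])
    then obtain ts where ts: "ts \<noteq> []" "hd ts = \<sigma>'" "successively R ts" "\<not> (\<exists>\<sigma>''. R (last ts) \<sigma>'')"
      using less by blast
    show ?thesis
      using ts r by (intro exI[of _ "\<sigma> # ts"]) (auto simp: successively_Cons)
  qed
qed



lemma num: "3 \<le> n \<Longrightarrow> (5/4::real)^(2*n+1) \<le> 2^n - 1"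
proof (induction rule: dec_induct)
  case base then show ?case by (simp add: power_divide)
next
  case (step n)
  have "(5/4::real)^(2*Suc n+1) = 25/16 * (5/4)^(2*n+1)" by (simp add: power_add)
  also have "\<dots> \<le> 25/16 * (2^n - 1)" using step.IH by simp
  also have "\<dots> \<le> 2^Suc n - 1"
  proof -
    have "(1::real) \<le> 2^n" by simp
    then show ?thesis by simp
  qed
  finally show ?case .
qed

lemma step_ok:
  assumes k: "k \<ge> 2" and lu: "length u = n" and lw: "length w = n" and a: "Adj u w" and x: "XX w < XX u"
  shows "bl_step k 2 (rsI n) (ordv u) (ordv w)"
proof -
  have ou: "is_ordering (rsI n) (ordv u)" and ow: "is_ordering (rsI n) (ordv w)"
    using ordering_ordv[OF lu] ordering_ordv[OF lw] by auto
  have wd: "\<forall>j\<in>set (ordv v). fst (rsI n ! j) = 1 \<and> hh (rsI n) j > 0" if "is_ordering (rsI n) (ordv v)" for v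
    using that rsI_wd unfolding is_ordering_def by auto
  have bu: "is_BL_packing 2 (rsI n) (ordv u) (placeall (rsI n) (0,0) (ordv u))"
    using BL_sim[OF _ wd[OF ou]] ou unfolding is_ordering_def by auto
  have bw: "is_BL_packing 2 (rsI n) (ordv w) (placeall (rsI n) (0,0) (ordv w))"
    using BL_sim[OF _ wd[OF ow]] ow unfolding is_ordering_def by auto
  have c: "card {i. i < length (rsI n) \<and> ordv u ! i \<noteq> ordv w ! i} \<le> k"
    using card_diff[OF a, of "rsI n"] k by linarith
  have h: "Hgt n (ordv w) < Hgt n (ordv u)" using Hgt_less[OF lu lw x] .
  show ?thesis unfolding bl_step_def using ou ow c bu bw h unfolding Hgt_def by blast
qed

lemma step_dec:
  assumes "bl_step k 2 (rsI n) \<sigma> \<sigma>'"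
  shows "is_ordering (rsI n) \<sigma>' \<and> Hgt n \<sigma>' < Hgt n \<sigma>"
proof -
  have o: "is_ordering (rsI n) \<sigma>" and o': "is_ordering (rsI n) \<sigma>'" using assms bl_step_def by auto
  obtain pos pos' where p: "is_BL_packing 2 (rsI n) \<sigma> pos" and p': "is_BL_packing 2 (rsI n) \<sigma>' pos'"
    and lt: "packing_height (rsI n) pos' < packing_height (rsI n) pos"
    using assms unfolding bl_step_def by blast
  have wd: "\<forall>j\<in>set \<tau>. fst (rsI n ! j) = 1 \<and> hh (rsI n) j > 0" if "is_ordering (rsI n) \<tau>" for \<tau>
    using that rsI_wd unfolding is_ordering_def by auto
  have b: "is_BL_packing 2 (rsI n) \<tau> (placeall (rsI n) (0,0) \<tau>)" if "is_ordering (rsI n) \<tau>" for \<tau>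
    using BL_sim[OF _ wd[OF that]] that unfolding is_ordering_def by auto
  have "Hgt n \<sigma> = packing_height (rsI n) pos" unfolding Hgt_def using height_unique[OF o b[OF o] p] .
  moreover have "Hgt n \<sigma>' = packing_height (rsI n) pos'" unfolding Hgt_def using height_unique[OF o' b[OF o'] p'] .
  ultimately show ?thesis using lt o' by simp
qed

lemma fin_orderings: "finite {\<tau>. is_ordering rs \<tau>}"
proof -
  have "{\<tau>. is_ordering rs \<tau>} \<subseteq> {xs. set xs \<subseteq> {..<length rs} \<and> length xs = length rs}"
  proof
    fix \<tau> assume "\<tau> \<in> {\<tau>. is_ordering rs \<tau>}"
    then have d: "distinct \<tau>" and st: "set \<tau> = {..<length rs}" unfolding is_ordering_def by auto
    have "length \<tau> = card (set \<tau>)" using distinct_card[OF d] by simp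
    also have "\<dots> = length rs" using st by simp
    finally show "\<tau> \<in> {xs. set xs \<subseteq> {..<length rs} \<and> length xs = length rs}" using st by simp
  qed
  then show ?thesis by (rule finite_subset) (intro finite_lists_length_eq, simp)
qed

theorem theorem6:
  fixes k :: nat
  assumes "k \<ge> 2"
  shows "\<exists>c::real. c > 1 \<and>
           (\<forall>N::nat. \<exists>W rs \<sigma>s. valid_instance W rs \<and> length rs \<ge> N \<and>
               bl_run k W rs \<sigma>s \<and> real (length \<sigma>s - 1) \<ge> c ^ length rs)"
proof -
  have main: "\<forall>N::nat. \<exists>W rs \<sigma>s. valid_instance W rs \<and> length rs \<ge> N \<and>
               bl_run k W rs \<sigma>s \<and> real (length \<sigma>s - 1) \<ge> (5/4::real) ^ length rs"
  proof
  fix N :: nat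
  define n where "n = N + 3"
  define rs where "rs = rsI n"
  define R where "R = bl_step k 2 rs"
  define A where "A = map ordv (PP n)"
  have PP: "length (PP n) = 2^n" "\<forall>v\<in>set (PP n). length v = n \<and> 0 < XX v \<and> XX v < 2^(n+1)"
    "sorted_wrt (\<lambda>u w. XX w < XX u) (PP n)" "successively Adj (PP n)"
    using PP_props[of n] by auto
  have "successively (\<lambda>u w. R (ordv u) (ordv w)) (PP n)"
  proof (rule succ_conj[OF PP(4) successively_if_sorted_wrt[OF PP(3)]])
    fix x y assume "x \<in> set (PP n)" "y \<in> set (PP n)" "Adj x y" "XX y < XX x"
    then show "R (ordv x) (ordv y)" unfolding R_def rs_def using PP(2) by (intro step_ok[OF assms]) auto
  qed
  then have sA: "successively R A" by (simp add: A_def successively_map)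
  have lA: "length A = 2^n" using PP(1) A_def by simp
  have neA: "A \<noteq> []" using lA by auto
  have oA: "is_ordering rs (hd A)"
  proof -
    have "PP n \<noteq> []" using PP(1) by auto
    then have "hd (PP n) \<in> set (PP n)" by simp
    then have "length (hd (PP n)) = n" using PP(2) by blast
    then show ?thesis using ordering_ordv[OF \<open>length (hd (PP n)) = n\<close>] unfolding A_def rs_def
      by (simp add: hd_map \<open>PP n \<noteq> []\<close>)
  qed
  have "\<exists>ts. ts \<noteq> [] \<and> hd ts = last A \<and> successively (bl_step k 2 (rsI n)) ts \<and> \<not> (\<exists>\<sigma>'. bl_step k 2 (rsI n) (last ts) \<sigma>')"
    by (rule ext_gen[where Q="is_ordering (rsI n)" and g="Hgt n", OF fin_orderings step_dec])
  then obtain ts where ts: "ts \<noteq> []" "hd ts = last A" "successively R ts" "\<not> (\<exists>\<sigma>'. R (last ts) \<sigma>')"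
    unfolding R_def rs_def by blast
  define \<sigma>s where "\<sigma>s = A @ tl ts"
  have s\<sigma>: "successively R \<sigma>s"
  proof -
    obtain t0 tr where t: "ts = t0 # tr" using ts(1) by (cases ts) auto
    have "successively R tr" and j: "tr = [] \<or> R t0 (hd tr)" using ts(3) t by (auto simp: successively_Cons)
    then show ?thesis unfolding \<sigma>s_def successively_append_iff using sA ts(2) t by auto
  qed
  have last\<sigma>: "last \<sigma>s = last ts"
  proof -
    obtain t0 tr where t: "ts = t0 # tr" using ts(1) by (cases ts) auto
    show ?thesis using t ts(2) neA unfolding \<sigma>s_def by (cases tr) auto
  qed
  have ne\<sigma>: "\<sigma>s \<noteq> []" using neA unfolding \<sigma>s_def by simp
  have hd\<sigma>: "hd \<sigma>s = hd A" using neA unfolding \<sigma>s_def by simp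
  have ch: "\<forall>i. Suc i < length \<sigma>s \<longrightarrow> bl_step k 2 rs (\<sigma>s ! i) (\<sigma>s ! Suc i)"
    using s\<sigma> succ_nth[of R \<sigma>s] unfolding R_def by blast
  have lo: "local_opt k 2 rs (last \<sigma>s)" unfolding local_opt_def last\<sigma> using ts(4) unfolding R_def .
  have run: "bl_run k 2 rs \<sigma>s"
    unfolding bl_run_def using ne\<sigma> hd\<sigma> oA ch lo by simp
  have vi: "valid_instance 2 rs"
    unfolding valid_instance_def rs_def
  proof (intro conjI ballI)
    show "rsI n \<noteq> []" by (simp add: rsI_def)
    fix r assume "r \<in> set (rsI n)"
    then obtain j where j: "j < length (rsI n)" "r = rsI n ! j" by (auto simp: in_set_conv_nth)
    then show "0 < fst r" "fst r \<le> 2" "0 < snd r" using rsI_wd[OF j(1)] by auto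
  qed simp
  have len: "length rs = 2*n+1" unfolding rs_def by (simp add: len_rsI)
  have n3: "3 \<le> n" unfolding n_def by simp
  have "(5/4::real)^length rs \<le> 2^n - 1" unfolding len using num[OF n3] .
  also have "\<dots> = real (2^n - 1)" by (simp add: of_nat_diff)
  also have "\<dots> \<le> real (length \<sigma>s - 1)"
  proof -
    have "(2::nat)^n - 1 \<le> length \<sigma>s - 1" unfolding \<sigma>s_def using lA by simp
    then show ?thesis by (simp only: of_nat_le_iff)
  qed
  finally have "(5/4::real)^length rs \<le> real (length \<sigma>s - 1)" .
  moreover have "length rs \<ge> N" using len n_def by simp
  ultimately show "\<exists>W rs \<sigma>s. valid_instance W rs \<and> length rs \<ge> N \<and>
               bl_run k W rs \<sigma>s \<and> real (length \<sigma>s - 1) \<ge> (5/4) ^ length rs"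
    using run vi by blast
  qed
  have "(1::real) < 5/4" by simp
  with main show ?thesis by blast
qed

end
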